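(* Let $t\geq 1$, $l\geq 1$, and let $C_1,\ldots,C_l$ be fans with $C_i=\{a_{i,1},\ldots,a_{i,m}\}$, simultaneously grounded by a curve $\gamma=\gamma_1\cup\cdots\cup\gamma_m$. If each $a_{i,j}$ intersects $\gamma$ in at most $t$ points, then there are indices $j_1<\cdots<j_r$ with $r=\lfloor\log^{(2l)}_{t+1}m\rfloor$ (the $2l$-times iterated base-$(t+1)$ logarithm) and a subcurve $\gamma'=\gamma'_1\cup\cdots\cup\gamma'_r\subseteq\gamma$ such that (1) the subfans $C'_i=\{a_{i,j_1},\ldots,a_{i,j_r}\}\subseteq C_i$, $1\leq i\leq l$, are simultaneously well-grounded by $\gamma'_1\cup\cdots\cup\gamma'_r$, and (2) $\gamma'_s\supseteq\gamma_{j_s}$ for $1\leq s\leq r$.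
   Context: All curves are simple; no two curves are tangent (a shared interior point is a proper crossing). A fan with apex $v$ is a collection of curves with common endpoint $v$. Let $\gamma$ be a curve with endpoints $p,q$, partitioned into subcurves $\gamma_1,\ldots,\gamma_m$ appearing in this order along $\gamma$ from $p$ to $q$ (consecutive pieces sharing an endpoint). A fan $C=\{a_1,\ldots,a_m\}$ with apex $v$ is grounded by $\gamma_1\cup\cdots\cup\gamma_m$ if $v\notin\gamma$ and each $a_i$ has its other endpoint on $\gamma_i$; well-grounded if in addition each $a_i$ intersects $\gamma$ only within $\gamma_i$. Several fans are simultaneously (well-)grounded by $\gamma_1\cup\cdots\cup\gamma_m$ if each is (well-)grounded with respect to the same partition. *)

theory Defs
  imports "HOL-Analysis.Analysis"
begin

text \<open>A simple curve with two
endpoints is an arc.  A curve g is split into m consecutive subcurves by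
parameters \<sigma> 0 < \<sigma> 1 < ... < \<sigma> m; the j-th piece (1 \<le> j \<le> m)
is the image of g on [\<sigma> (j-1), \<sigma> j].\<close>

definition partition_params :: "(nat \<Rightarrow> real) \<Rightarrow> nat \<Rightarrow> bool" where
  "partition_params \<sigma> m \<longleftrightarrow> 0 \<le> \<sigma> 0 \<and> \<sigma> m \<le> 1 \<and> (\<forall>k<m. \<sigma> k < \<sigma> (Suc k))"

definition piece :: "(real \<Rightarrow> complex) \<Rightarrow> (nat \<Rightarrow> real) \<Rightarrow> nat \<Rightarrow> complex set" where
  "piece g \<sigma> j = g ` {\<sigma> (j - 1) .. \<sigma> j}"

definition whole :: "(real \<Rightarrow> complex) \<Rightarrow> (nat \<Rightarrow> real) \<Rightarrow> nat \<Rightarrow> complex set" where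
  "whole g \<sigma> m = g ` {\<sigma> 0 .. \<sigma> m}"

definition grounded ::
  "(real \<Rightarrow> complex) \<Rightarrow> (nat \<Rightarrow> real) \<Rightarrow> nat \<Rightarrow> complex \<Rightarrow> (nat \<Rightarrow> real \<Rightarrow> complex) \<Rightarrow> bool" where
  "grounded g \<sigma> m v a \<longleftrightarrow> v \<notin> whole g \<sigma> m \<and>
     (\<forall>j\<in>{1..m}. pathstart (a j) = v \<and> pathfinish (a j) \<in> piece g \<sigma> j)"

definition well_grounded ::
  "(real \<Rightarrow> complex) \<Rightarrow> (nat \<Rightarrow> real) \<Rightarrow> nat \<Rightarrow> complex \<Rightarrow> (nat \<Rightarrow> real \<Rightarrow> complex) \<Rightarrow> bool" where
  "well_grounded g \<sigma> m v a \<longleftrightarrow> grounded g \<sigma> m v a \<and>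
     (\<forall>j\<in>{1..m}. path_image (a j) \<inter> whole g \<sigma> m \<subseteq> piece g \<sigma> j)"

text \<open>Iterated base-b logarithm; once a nonpositive value is reached
(logarithm undefined) the iteration is frozen at 0, making the bound trivial.\<close>
fun iter_log :: "real \<Rightarrow> nat \<Rightarrow> real \<Rightarrow> real" where
  "iter_log b 0 x = x"
| "iter_log b (Suc k) x = (let y = iter_log b k x in if y > 0 then log b y else 0)"

end

theory Submission
  imports Defs
begin

fun NN :: "nat \<Rightarrow> nat \<Rightarrow> nat" where
  "NN D 0 = 0"
| "NN D (Suc n) = (D + 1) * NN D n + D + 2"

definition hprop1 :: "(nat \<Rightarrow> real) \<Rightarrow> (nat \<Rightarrow> real) \<Rightarrow> (nat \<Rightarrow> real set) \<Rightarrow> nat set \<Rightarrow> bool" where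
  "hprop1 lo hi P C \<longleftrightarrow> (\<forall>c\<in>C. \<forall>p\<in>P c. \<forall>d1\<in>C. \<forall>d2\<in>C. c < d1 \<longrightarrow> c < d2 \<longrightarrow> \<not> (lo d1 \<le> p \<and> p \<le> hi d2))"

definition hprop2 :: "(nat \<Rightarrow> real) \<Rightarrow> (nat \<Rightarrow> real) \<Rightarrow> (nat \<Rightarrow> real set) \<Rightarrow> nat set \<Rightarrow> bool" where
  "hprop2 lo hi P C \<longleftrightarrow> (\<forall>c\<in>C. \<forall>p\<in>P c. \<forall>d1\<in>C. \<forall>d2\<in>C. d1 < c \<longrightarrow> d2 < c \<longrightarrow> \<not> (lo d1 \<le> p \<and> p \<le> hi d2))"

lemma blocks_le2:
  fixes S :: "nat set"
  assumes "finite S" "\<forall>k\<in>S. lo k < hi k" "\<forall>k\<in>S. \<forall>k'\<in>S. k < k' \<longrightarrow> hi k \<le> lo k'"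
  shows "card {k\<in>S. lo k \<le> (q::real) \<and> q \<le> hi k} \<le> 2"
proof -
  let ?X = "{k\<in>S. lo k \<le> q \<and> q \<le> hi k}"
  have fin: "finite ?X" using assms(1) by simp
  show ?thesis
  proof (cases "?X = {}")
    case True then show ?thesis by (simp only: True card.empty)
  next
    case False
    have mi: "Min ?X \<in> ?X" by (rule Min_in[OF fin False])
    have ma: "Max ?X \<in> ?X" by (rule Max_in[OF fin False])
    have "?X \<subseteq> {Min ?X, Max ?X}"
    proof
      fix k assume k: "k \<in> ?X"
      have "Min ?X \<le> k" "k \<le> Max ?X" using k fin by auto
      show "k \<in> {Min ?X, Max ?X}"
      proof (rule ccontr)
        assume "k \<notin> {Min ?X, Max ?X}"
        then have a: "Min ?X < k" "k < Max ?X" using \<open>Min ?X \<le> k\<close> \<open>k \<le> Max ?X\<close> by auto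
        have "hi (Min ?X) \<le> lo k" using assms(3) mi k a by blast
        moreover have "hi k \<le> lo (Max ?X)" using assms(3) ma k a by blast
        ultimately show False using mi ma k assms(2) by force
      qed
    qed
    then have "card ?X \<le> card {Min ?X, Max ?X}" by (rule card_mono[rotated]) simp
    also have "\<dots> \<le> 2" by (cases "Min ?X = Max ?X") auto
    finally show ?thesis .
  qed
qed

lemma blocks_le1a:
  fixes S :: "nat set"
  assumes "finite S" "\<forall>k\<in>S. lo k < hi k" "\<forall>k\<in>S. \<forall>k'\<in>S. k < k' \<longrightarrow> hi k \<le> lo k'" "c \<in> S"
  shows "card {k\<in>S. c < k \<and> lo k \<le> (hi c::real) \<and> hi c \<le> hi k} \<le> 1"
proof -
  have "\<forall>a1\<in>{k\<in>S. c < k \<and> lo k \<le> hi c \<and> hi c \<le> hi k}. \<forall>a2\<in>{k\<in>S. c < k \<and> lo k \<le> hi c \<and> hi c \<le> hi k}. a1 = a2"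
  proof (intro ballI)
    fix a1 a2 assume a1: "a1 \<in> {k\<in>S. c < k \<and> lo k \<le> hi c \<and> hi c \<le> hi k}" and a2: "a2 \<in> {k\<in>S. c < k \<and> lo k \<le> hi c \<and> hi c \<le> hi k}"
    have l1: "hi c \<le> lo a1" "hi c \<le> lo a2" using a1 a2 assms(3,4) by auto
    show "a1 = a2"
    proof (rule ccontr)
      assume "a1 \<noteq> a2"
      then consider "a1 < a2" | "a2 < a1" by linarith
      then show False
      proof cases
        case 1 then have "hi a1 \<le> lo a2" using assms(3) a1 a2 by auto
        then show False using a1 a2 l1 assms(2) by force
      next
        case 2 then have "hi a2 \<le> lo a1" using assms(3) a1 a2 by auto
        then show False using a1 a2 l1 assms(2) by force
      qed
    qed
  qed
  moreover have "finite {k\<in>S. c < k \<and> lo k \<le> hi c \<and> hi c \<le> hi k}" using assms(1) by simp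
  ultimately have "card {k\<in>S. c < k \<and> lo k \<le> hi c \<and> hi c \<le> hi k} \<le> Suc 0" by (subst card_le_Suc0_iff_eq) auto
  then show ?thesis by simp
qed

lemma blocks_le1b:
  fixes S :: "nat set"
  assumes "finite S" "\<forall>k\<in>S. lo k < hi k" "\<forall>k\<in>S. \<forall>k'\<in>S. k < k' \<longrightarrow> hi k \<le> lo k'" "c \<in> S"
  shows "card {k\<in>S. k < c \<and> lo k \<le> (lo c::real) \<and> lo c \<le> hi k} \<le> 1"
proof -
  have "\<forall>a1\<in>{k\<in>S. k < c \<and> lo k \<le> lo c \<and> lo c \<le> hi k}. \<forall>a2\<in>{k\<in>S. k < c \<and> lo k \<le> lo c \<and> lo c \<le> hi k}. a1 = a2"
  proof (intro ballI)
    fix a1 a2 assume a1: "a1 \<in> {k\<in>S. k < c \<and> lo k \<le> lo c \<and> lo c \<le> hi k}" and a2: "a2 \<in> {k\<in>S. k < c \<and> lo k \<le> lo c \<and> lo c \<le> hi k}"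
    have l1: "hi a1 \<le> lo c" "hi a2 \<le> lo c" using a1 a2 assms(3,4) by auto
    show "a1 = a2"
    proof (rule ccontr)
      assume "a1 \<noteq> a2"
      then consider "a1 < a2" | "a2 < a1" by linarith
      then show False
      proof cases
        case 1 then have "hi a1 \<le> lo a2" using assms(3) a1 a2 by auto
        then show False using a1 a2 l1 assms(2) by force
      next
        case 2 then have "hi a2 \<le> lo a1" using assms(3) a1 a2 by auto
        then show False using a1 a2 l1 assms(2) by force
      qed
    qed
  qed
  moreover have "finite {k\<in>S. k < c \<and> lo k \<le> lo c \<and> lo c \<le> hi k}" using assms(1) by simp
  ultimately have "card {k\<in>S. k < c \<and> lo k \<le> lo c \<and> lo c \<le> hi k} \<le> Suc 0" by (subst card_le_Suc0_iff_eq) auto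
  then show ?thesis by simp
qed


lemma pass1:
  fixes D :: nat and lo hi :: "nat \<Rightarrow> real" and P :: "nat \<Rightarrow> real set" and S :: "nat set"
  shows "finite S \<Longrightarrow> (\<forall>k\<in>S. lo k < hi k) \<Longrightarrow> (\<forall>k\<in>S. \<forall>k'\<in>S. k < k' \<longrightarrow> hi k \<le> lo k')
    \<Longrightarrow> (\<forall>k\<in>S. finite (P k) \<and> card (P k \<inter> {x. hi k < x}) \<le> D)
    \<Longrightarrow> NN D n \<le> card S \<Longrightarrow> \<exists>C\<subseteq>S. card C = n \<and> hprop1 lo hi P C"
proof (induction n arbitrary: S)
  case 0
  then show ?case by (intro exI[of _ "{}"]) (auto simp: hprop1_def)
next
  case (Suc n)
  note fS = Suc.prems(1) and blk = Suc.prems(2) and ord = Suc.prems(3) and Pk = Suc.prems(4)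
  have "S \<noteq> {}" using Suc.prems(5) by auto
  define c where "c = Min S"
  have cS: "c \<in> S" using fS \<open>S \<noteq> {}\<close> c_def by simp
  define R where "R = S - {c}"
  have Rgt: "\<forall>k\<in>R. c < k" using fS unfolding R_def c_def by (auto intro: Min_le order.not_eq_order_implies_strict)
  have cardR: "Suc (card R) = card S" unfolding R_def by (rule card_Suc_Diff1[OF fS cS])
  define Q where "Q = P c \<inter> {x. hi c < x}"
  have fQ: "finite Q" and cQ: "card Q \<le> D" using Pk cS unfolding Q_def by auto
  define X where "X = (\<lambda>q. {k\<in>S. lo k \<le> q \<and> q \<le> hi k})"
  define Y where "Y = {k\<in>S. c < k \<and> lo k \<le> hi c \<and> hi c \<le> hi k}"
  define Bad where "Bad = {k\<in>R. \<exists>q\<in>P c. hi c \<le> q \<and> lo k \<le> q \<and> q \<le> hi k}"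
  have "Bad \<subseteq> (\<Union>q\<in>Q. X q) \<union> Y"
  proof
    fix k assume "k \<in> Bad"
    then obtain q where q: "q \<in> P c" "hi c \<le> q" "lo k \<le> q" "q \<le> hi k" "k \<in> R" unfolding Bad_def by auto
    show "k \<in> (\<Union>q\<in>Q. X q) \<union> Y"
    proof (cases "q = hi c")
      case True then show ?thesis using q Rgt unfolding Y_def R_def by auto
    next
      case False then have "q \<in> Q" using q unfolding Q_def by auto
      then show ?thesis using q unfolding X_def R_def by auto
    qed
  qed
  then have "card Bad \<le> card ((\<Union>q\<in>Q. X q) \<union> Y)" by (rule card_mono[rotated]) (use fS fQ in \<open>auto simp: X_def Y_def\<close>)
  also have "\<dots> \<le> card (\<Union>q\<in>Q. X q) + card Y" by (rule card_Un_le)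
  also have "card (\<Union>q\<in>Q. X q) \<le> (\<Sum>q\<in>Q. card (X q))" by (rule card_UN_le[OF fQ])
  also have "(\<Sum>q\<in>Q. card (X q)) \<le> card Q * 2"
    using sum_bounded_above[of Q "\<lambda>q. card (X q)" 2] blocks_le2[OF fS blk ord] unfolding X_def by auto
  also have "card Y \<le> 1" unfolding Y_def by (rule blocks_le1a[OF fS blk ord cS])
  finally have cBad: "card Bad \<le> 2 * D + 1" using cQ by linarith
  define Good where "Good = R - Bad"
  define gv where "gv = (\<lambda>k. card {q\<in>Q. q < lo k})"
  define G where "G = (\<lambda>v. {k\<in>Good. gv k = v})"
  have gvle: "gv k \<le> D" for k
  proof -
    have "gv k \<le> card Q" unfolding gv_def by (rule card_mono[OF fQ]) auto
    then show ?thesis using cQ by linarith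
  qed
  have "\<exists>v\<le>D. NN D n \<le> card (G v)"
  proof (rule ccontr)
    assume "\<not> ?thesis"
    then have lt: "\<forall>v\<in>{..D}. card (G v) + 1 \<le> NN D n" by auto
    have "Good \<subseteq> (\<Union>v\<in>{..D}. G v)" unfolding G_def using gvle by auto
    then have "card Good \<le> card (\<Union>v\<in>{..D}. G v)" by (rule card_mono[rotated]) (use fS in \<open>auto simp: G_def Good_def R_def\<close>)
    also have "\<dots> \<le> (\<Sum>v\<in>{..D}. card (G v))" by (rule card_UN_le) simp
    finally have cg: "card Good \<le> (\<Sum>v\<in>{..D}. card (G v))" .
    have "(\<Sum>v\<in>{..D}. (1::nat)) = D + 1" by simp
    then have "card Good + (D + 1) \<le> (\<Sum>v\<in>{..D}. card (G v)) + (\<Sum>v\<in>{..D}. 1)" using cg by linarith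
    also have "\<dots> = (\<Sum>v\<in>{..D}. card (G v) + 1)" by (rule sum.distrib[symmetric])
    also have "\<dots> \<le> (\<Sum>v\<in>{..D}. NN D n)" by (rule sum_mono) (use lt in auto)
    also have "\<dots> = (D + 1) * NN D n" by simp
    finally have A: "card Good + (D + 1) \<le> (D + 1) * NN D n" .
    have "R \<subseteq> Good \<union> Bad" unfolding Good_def by auto
    then have "card R \<le> card (Good \<union> Bad)" by (rule card_mono[rotated]) (use fS in \<open>auto simp: Good_def Bad_def R_def\<close>)
    also have "\<dots> \<le> card Good + card Bad" by (rule card_Un_le)
    finally have B: "card R \<le> card Good + card Bad" .
    have C: "(D + 1) * NN D n + D + 2 \<le> card S" using Suc.prems(5) by simp
    show False using A B C cBad cardR by linarith
  qed
  then obtain v where v: "v \<le> D" "NN D n \<le> card (G v)" by blast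
  have GS: "G v \<subseteq> S" unfolding G_def Good_def R_def by auto
  have fG: "finite (G v)" using GS fS by (rule finite_subset)
  have h1: "\<forall>k\<in>G v. lo k < hi k" using GS blk by blast
  have h2: "\<forall>k\<in>G v. \<forall>k'\<in>G v. k < k' \<longrightarrow> hi k \<le> lo k'" using GS ord by blast
  have h3: "\<forall>k\<in>G v. finite (P k) \<and> card (P k \<inter> {x. hi k < x}) \<le> D" using GS Pk by blast
  obtain C' where C': "C' \<subseteq> G v" "card C' = n" "hprop1 lo hi P C'"
    using Suc.IH[OF fG h1 h2 h3 v(2)] by blast
  have Gprop: "\<not> (lo d1 \<le> p \<and> p \<le> hi d2)" if d: "d1 \<in> G v" "d2 \<in> G v" and p: "p \<in> P c" for d1 d2 p
  proof
    assume h: "lo d1 \<le> p \<and> p \<le> hi d2"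
    have d1R: "d1 \<in> R" "d1 \<notin> Bad" and d2R: "d2 \<in> R" "d2 \<notin> Bad" and gg: "gv d1 = gv d2"
      using d unfolding G_def Good_def by auto
    have cd: "c < d1" "c < d2" using d1R d2R Rgt by auto
    have hc: "hi c \<le> lo d1" "hi c \<le> lo d2" using ord cd cS d1R d2R unfolding R_def by auto
    have lh1: "lo d1 < hi d1" and lh2: "lo d2 < hi d2" using blk d1R d2R unfolding R_def by auto
    show False
    proof (cases "p \<le> hi c")
      case True
      then have "p = lo d1" using h hc by linarith
      then have "hi c \<le> p" "lo d1 \<le> p" "p \<le> hi d1" using hc lh1 by auto
      then have "d1 \<in> R \<and> (\<exists>q\<in>P c. hi c \<le> q \<and> lo d1 \<le> q \<and> q \<le> hi d1)" using d1R(1) p by blast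
      then have "d1 \<in> Bad" unfolding Bad_def by simp
      then show False using d1R by simp
    next
      case False
      then have pQ: "p \<in> Q" using p unfolding Q_def by auto
      have p1: "hi d1 < p"
      proof (rule ccontr)
        assume "\<not> hi d1 < p"
        then have "hi c \<le> p" "lo d1 \<le> p" "p \<le> hi d1" using False h by auto
        then have "d1 \<in> R \<and> (\<exists>q\<in>P c. hi c \<le> q \<and> lo d1 \<le> q \<and> q \<le> hi d1)" using d1R(1) p by blast
        then have "d1 \<in> Bad" unfolding Bad_def by simp
        then show False using d1R by simp
      qed
      have p2: "p < lo d2"
      proof (rule ccontr)
        assume "\<not> p < lo d2"
        then have "hi c \<le> p" "lo d2 \<le> p" "p \<le> hi d2" using False h by auto
        then have "d2 \<in> R \<and> (\<exists>q\<in>P c. hi c \<le> q \<and> lo d2 \<le> q \<and> q \<le> hi d2)" using d2R(1) p by blast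
        then have "d2 \<in> Bad" unfolding Bad_def by simp
        then show False using d2R by simp
      qed
      have "d1 < d2"
      proof (rule ccontr)
        assume "\<not> d1 < d2"
        then consider "d1 = d2" | "d2 < d1" by linarith
        then show False
        proof cases
          case 1 then show ?thesis using p1 p2 lh1 by simp
        next
          case 2 then have "hi d2 \<le> lo d1" using ord d1R d2R unfolding R_def by auto
          then show ?thesis using p1 h lh1 by linarith
        qed
      qed
      then have "hi d1 \<le> lo d2" using ord d1R d2R unfolding R_def by auto
      have sub: "{q\<in>Q. q < lo d1} \<subseteq> {q\<in>Q. q < lo d2}"
        using \<open>hi d1 \<le> lo d2\<close> lh1 by auto
      have "p \<in> {q\<in>Q. q < lo d2}" "p \<notin> {q\<in>Q. q < lo d1}" using pQ p2 h by auto
      then have "{q\<in>Q. q < lo d1} \<subset> {q\<in>Q. q < lo d2}" using sub by blast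
      then have "gv d1 < gv d2" unfolding gv_def by (rule psubset_card_mono[rotated]) (use fQ in simp)
      then show False using gg by simp
    qed
  qed
  have cnC': "c \<notin> C'" using C'(1) unfolding G_def Good_def R_def by auto
  have fC': "finite C'" using C'(1) fG by (rule finite_subset)
  show ?case
  proof (intro exI[of _ "insert c C'"] conjI)
    show "insert c C' \<subseteq> S" using C'(1) GS cS by auto
    show "card (insert c C') = Suc n" using cnC' fC' C'(2) by simp
    show "hprop1 lo hi P (insert c C')"
      unfolding hprop1_def
    proof (intro ballI impI)
      fix x p d1 d2 assume x: "x \<in> insert c C'" and p: "p \<in> P x" and d: "d1 \<in> insert c C'" "d2 \<in> insert c C'"
        and xd: "x < d1" "x < d2"
      have C'gt: "\<forall>k\<in>C'. c < k" using C'(1) Rgt unfolding G_def Good_def by auto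
      show "\<not> (lo d1 \<le> p \<and> p \<le> hi d2)"
      proof (cases "x = c")
        case True
        then have "d1 \<in> C'" "d2 \<in> C'" using d xd by auto
        then show ?thesis using Gprop C'(1) p True by auto
      next
        case False
        then have "x \<in> C'" using x by auto
        then have "d1 \<in> C'" "d2 \<in> C'" using d xd C'gt by auto
        then show ?thesis using C'(3) \<open>x \<in> C'\<close> p xd unfolding hprop1_def by blast
      qed
    qed
  qed
qed

lemma pass2:
  fixes D :: nat and lo hi :: "nat \<Rightarrow> real" and P :: "nat \<Rightarrow> real set" and S :: "nat set"
  shows "finite S \<Longrightarrow> (\<forall>k\<in>S. lo k < hi k) \<Longrightarrow> (\<forall>k\<in>S. \<forall>k'\<in>S. k < k' \<longrightarrow> hi k \<le> lo k')
    \<Longrightarrow> (\<forall>k\<in>S. finite (P k) \<and> card (P k \<inter> {x. x < lo k}) \<le> D)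
    \<Longrightarrow> NN D n \<le> card S \<Longrightarrow> \<exists>C\<subseteq>S. card C = n \<and> hprop2 lo hi P C"
proof (induction n arbitrary: S)
  case 0
  then show ?case by (intro exI[of _ "{}"]) (auto simp: hprop2_def)
next
  case (Suc n)
  note fS = Suc.prems(1) and blk = Suc.prems(2) and ord = Suc.prems(3) and Pk = Suc.prems(4)
  have "S \<noteq> {}" using Suc.prems(5) by auto
  define c where "c = Max S"
  have cS: "c \<in> S" using fS \<open>S \<noteq> {}\<close> c_def by simp
  define R where "R = S - {c}"
  have Rgt: "\<forall>k\<in>R. k < c" using fS unfolding R_def c_def by (auto intro: Max_ge order.not_eq_order_implies_strict)
  have cardR: "Suc (card R) = card S" unfolding R_def by (rule card_Suc_Diff1[OF fS cS])
  define Q where "Q = P c \<inter> {x. x < lo c}"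
  have fQ: "finite Q" and cQ: "card Q \<le> D" using Pk cS unfolding Q_def by auto
  define X where "X = (\<lambda>q. {k\<in>S. lo k \<le> q \<and> q \<le> hi k})"
  define Y where "Y = {k\<in>S. k < c \<and> lo k \<le> lo c \<and> lo c \<le> hi k}"
  define Bad where "Bad = {k\<in>R. \<exists>q\<in>P c. q \<le> lo c \<and> lo k \<le> q \<and> q \<le> hi k}"
  have "Bad \<subseteq> (\<Union>q\<in>Q. X q) \<union> Y"
  proof
    fix k assume "k \<in> Bad"
    then obtain q where q: "q \<in> P c" "q \<le> lo c" "lo k \<le> q" "q \<le> hi k" "k \<in> R" unfolding Bad_def by auto
    show "k \<in> (\<Union>q\<in>Q. X q) \<union> Y"
    proof (cases "q = lo c")
      case True then show ?thesis using q Rgt unfolding Y_def R_def by auto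
    next
      case False then have "q \<in> Q" using q unfolding Q_def by auto
      then show ?thesis using q unfolding X_def R_def by auto
    qed
  qed
  then have "card Bad \<le> card ((\<Union>q\<in>Q. X q) \<union> Y)" by (rule card_mono[rotated]) (use fS fQ in \<open>auto simp: X_def Y_def\<close>)
  also have "\<dots> \<le> card (\<Union>q\<in>Q. X q) + card Y" by (rule card_Un_le)
  also have "card (\<Union>q\<in>Q. X q) \<le> (\<Sum>q\<in>Q. card (X q))" by (rule card_UN_le[OF fQ])
  also have "(\<Sum>q\<in>Q. card (X q)) \<le> card Q * 2"
    using sum_bounded_above[of Q "\<lambda>q. card (X q)" 2] blocks_le2[OF fS blk ord] unfolding X_def by auto
  also have "card Y \<le> 1" unfolding Y_def by (rule blocks_le1b[OF fS blk ord cS])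
  finally have cBad: "card Bad \<le> 2 * D + 1" using cQ by linarith
  define Good where "Good = R - Bad"
  define gv where "gv = (\<lambda>k. card {q\<in>Q. hi k < q})"
  define G where "G = (\<lambda>v. {k\<in>Good. gv k = v})"
  have gvle: "gv k \<le> D" for k
  proof -
    have "gv k \<le> card Q" unfolding gv_def by (rule card_mono[OF fQ]) auto
    then show ?thesis using cQ by linarith
  qed
  have "\<exists>v\<le>D. NN D n \<le> card (G v)"
  proof (rule ccontr)
    assume "\<not> ?thesis"
    then have lt: "\<forall>v\<in>{..D}. card (G v) + 1 \<le> NN D n" by auto
    have "Good \<subseteq> (\<Union>v\<in>{..D}. G v)" unfolding G_def using gvle by auto
    then have "card Good \<le> card (\<Union>v\<in>{..D}. G v)" by (rule card_mono[rotated]) (use fS in \<open>auto simp: G_def Good_def R_def\<close>)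
    also have "\<dots> \<le> (\<Sum>v\<in>{..D}. card (G v))" by (rule card_UN_le) simp
    finally have cg: "card Good \<le> (\<Sum>v\<in>{..D}. card (G v))" .
    have "(\<Sum>v\<in>{..D}. (1::nat)) = D + 1" by simp
    then have "card Good + (D + 1) \<le> (\<Sum>v\<in>{..D}. card (G v)) + (\<Sum>v\<in>{..D}. 1)" using cg by linarith
    also have "\<dots> = (\<Sum>v\<in>{..D}. card (G v) + 1)" by (rule sum.distrib[symmetric])
    also have "\<dots> \<le> (\<Sum>v\<in>{..D}. NN D n)" by (rule sum_mono) (use lt in auto)
    also have "\<dots> = (D + 1) * NN D n" by simp
    finally have A: "card Good + (D + 1) \<le> (D + 1) * NN D n" .
    have "R \<subseteq> Good \<union> Bad" unfolding Good_def by auto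
    then have "card R \<le> card (Good \<union> Bad)" by (rule card_mono[rotated]) (use fS in \<open>auto simp: Good_def Bad_def R_def\<close>)
    also have "\<dots> \<le> card Good + card Bad" by (rule card_Un_le)
    finally have B: "card R \<le> card Good + card Bad" .
    have C: "(D + 1) * NN D n + D + 2 \<le> card S" using Suc.prems(5) by simp
    show False using A B C cBad cardR by linarith
  qed
  then obtain v where v: "v \<le> D" "NN D n \<le> card (G v)" by blast
  have GS: "G v \<subseteq> S" unfolding G_def Good_def R_def by auto
  have fG: "finite (G v)" using GS fS by (rule finite_subset)
  have h1: "\<forall>k\<in>G v. lo k < hi k" using GS blk by blast
  have h2: "\<forall>k\<in>G v. \<forall>k'\<in>G v. k < k' \<longrightarrow> hi k \<le> lo k'" using GS ord by blast
  have h3: "\<forall>k\<in>G v. finite (P k) \<and> card (P k \<inter> {x. x < lo k}) \<le> D" using GS Pk by blast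
  obtain C' where C': "C' \<subseteq> G v" "card C' = n" "hprop2 lo hi P C'"
    using Suc.IH[OF fG h1 h2 h3 v(2)] by blast
  have Gprop: "\<not> (lo d1 \<le> p \<and> p \<le> hi d2)" if d: "d1 \<in> G v" "d2 \<in> G v" and p: "p \<in> P c" for d1 d2 p
  proof
    assume h: "lo d1 \<le> p \<and> p \<le> hi d2"
    have d1R: "d1 \<in> R" "d1 \<notin> Bad" and d2R: "d2 \<in> R" "d2 \<notin> Bad" and gg: "gv d1 = gv d2"
      using d unfolding G_def Good_def by auto
    have cd: "d1 < c" "d2 < c" using d1R d2R Rgt by auto
    have hc: "hi d1 \<le> lo c" "hi d2 \<le> lo c" using ord cd cS d1R d2R unfolding R_def by auto
    have lh1: "lo d1 < hi d1" and lh2: "lo d2 < hi d2" using blk d1R d2R unfolding R_def by auto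
    show False
    proof (cases "lo c \<le> p")
      case True
      then have "p \<le> lo c" "lo d2 \<le> p" "p \<le> hi d2" using h hc lh2 by auto
      then have "d2 \<in> R \<and> (\<exists>q\<in>P c. q \<le> lo c \<and> lo d2 \<le> q \<and> q \<le> hi d2)" using d2R(1) p by blast
      then have "d2 \<in> Bad" unfolding Bad_def by simp
      then show False using d2R by simp
    next
      case False
      then have pQ: "p \<in> Q" using p unfolding Q_def by auto
      have p2: "p < lo d2"
      proof (rule ccontr)
        assume "\<not> p < lo d2"
        then have "p \<le> lo c" "lo d2 \<le> p" "p \<le> hi d2" using False h by auto
        then have "d2 \<in> R \<and> (\<exists>q\<in>P c. q \<le> lo c \<and> lo d2 \<le> q \<and> q \<le> hi d2)" using d2R(1) p by blast
        then have "d2 \<in> Bad" unfolding Bad_def by simp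
        then show False using d2R by simp
      qed
      have p1: "hi d1 < p"
      proof (rule ccontr)
        assume "\<not> hi d1 < p"
        then have "p \<le> lo c" "lo d1 \<le> p" "p \<le> hi d1" using False h by auto
        then have "d1 \<in> R \<and> (\<exists>q\<in>P c. q \<le> lo c \<and> lo d1 \<le> q \<and> q \<le> hi d1)" using d1R(1) p by blast
        then have "d1 \<in> Bad" unfolding Bad_def by simp
        then show False using d1R by simp
      qed
      have "d1 < d2"
      proof (rule ccontr)
        assume "\<not> d1 < d2"
        then consider "d1 = d2" | "d2 < d1" by linarith
        then show False
        proof cases
          case 1 then show ?thesis using p1 p2 lh1 by simp
        next
          case 2 then have "hi d2 \<le> lo d1" using ord d1R d2R unfolding R_def by auto
          then show ?thesis using p2 h lh2 by linarith
        qed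
      qed
      then have "hi d1 \<le> lo d2" using ord d1R d2R unfolding R_def by auto
      have sub: "{q\<in>Q. hi d2 < q} \<subseteq> {q\<in>Q. hi d1 < q}"
        using \<open>hi d1 \<le> lo d2\<close> lh2 by auto
      have "p \<in> {q\<in>Q. hi d1 < q}" "p \<notin> {q\<in>Q. hi d2 < q}" using pQ p1 h by auto
      then have "{q\<in>Q. hi d2 < q} \<subset> {q\<in>Q. hi d1 < q}" using sub by blast
      then have "gv d2 < gv d1" unfolding gv_def by (rule psubset_card_mono[rotated]) (use fQ in simp)
      then show False using gg by simp
    qed
  qed
  have cnC': "c \<notin> C'" using C'(1) unfolding G_def Good_def R_def by auto
  have fC': "finite C'" using C'(1) fG by (rule finite_subset)
  show ?case
  proof (intro exI[of _ "insert c C'"] conjI)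
    show "insert c C' \<subseteq> S" using C'(1) GS cS by auto
    show "card (insert c C') = Suc n" using cnC' fC' C'(2) by simp
    show "hprop2 lo hi P (insert c C')"
      unfolding hprop2_def
    proof (intro ballI impI)
      fix x p d1 d2 assume x: "x \<in> insert c C'" and p: "p \<in> P x" and d: "d1 \<in> insert c C'" "d2 \<in> insert c C'"
        and xd: "d1 < x" "d2 < x"
      have C'gt: "\<forall>k\<in>C'. k < c" using C'(1) Rgt unfolding G_def Good_def by auto
      show "\<not> (lo d1 \<le> p \<and> p \<le> hi d2)"
      proof (cases "x = c")
        case True
        then have "d1 \<in> C'" "d2 \<in> C'" using d xd by auto
        then show ?thesis using Gprop C'(1) p True by auto
      next
        case False
        then have "x \<in> C'" using x by auto
        then have "d1 \<in> C'" "d2 \<in> C'" using d xd C'gt by auto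
        then show ?thesis using C'(3) \<open>x \<in> C'\<close> p xd unfolding hprop2_def by blast
      qed
    qed
  qed
qed



lemma hprop1_mono: "hprop1 lo hi P C \<Longrightarrow> C' \<subseteq> C \<Longrightarrow> hprop1 lo hi P C'"
  unfolding hprop1_def by blast

lemma hprop2_mono: "hprop2 lo hi P C \<Longrightarrow> C' \<subseteq> C \<Longrightarrow> hprop2 lo hi P C'"
  unfolding hprop2_def by blast

lemma multi1:
  fixes D :: nat and lo hi :: "nat \<Rightarrow> real" and P :: "nat \<Rightarrow> nat \<Rightarrow> real set" and I :: "nat set"
  assumes "finite I"
  shows "finite S \<Longrightarrow> (\<forall>k\<in>S. lo k < hi k) \<Longrightarrow> (\<forall>k\<in>S. \<forall>k'\<in>S. k < k' \<longrightarrow> hi k \<le> lo k')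
    \<Longrightarrow> (\<forall>i\<in>I. \<forall>k\<in>S. finite (P i k) \<and> card (P i k \<inter> {x. hi k < x}) \<le> D)
    \<Longrightarrow> (NN D ^^ card I) n \<le> card S \<Longrightarrow> \<exists>C\<subseteq>S. card C = n \<and> (\<forall>i\<in>I. hprop1 lo hi (P i) C)"
  using assms
proof (induction I arbitrary: S rule: finite_induct)
  case empty
  have "n \<le> card S" using empty.prems(5) by simp
  then obtain T where "T \<subseteq> S" "card T = n" by (rule obtain_subset_with_card_n)
  then show ?case by (intro exI[of _ T]) simp
next
  case (insert i I)
  have fS: "finite S" and blk: "\<forall>k\<in>S. lo k < hi k" and ord: "\<forall>k\<in>S. \<forall>k'\<in>S. k < k' \<longrightarrow> hi k \<le> lo k'"
    and Pk: "\<forall>j\<in>insert i I. \<forall>k\<in>S. finite (P j k) \<and> card (P j k \<inter> {x. hi k < x}) \<le> D"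
    using insert.prems by auto
  have NNle: "NN D ((NN D ^^ card I) n) \<le> card S" using insert.prems(5) insert.hyps by simp
  have Pi: "\<forall>k\<in>S. finite (P i k) \<and> card (P i k \<inter> {x. hi k < x}) \<le> D" using Pk by blast
  have "\<exists>C\<subseteq>S. card C = (NN D ^^ card I) n \<and> hprop1 lo hi (P i) C" by (rule pass1[OF fS blk ord Pi NNle])
  then obtain C0 where C0: "C0 \<subseteq> S" "card C0 = (NN D ^^ card I) n" "hprop1 lo hi (P i) C0" by blast
  have fC0: "finite C0" using C0(1) fS by (rule finite_subset)
  have h1: "\<forall>k\<in>C0. lo k < hi k" using C0(1) blk by blast
  have h2: "\<forall>k\<in>C0. \<forall>k'\<in>C0. k < k' \<longrightarrow> hi k \<le> lo k'" using C0(1) ord by blast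
  have h3: "\<forall>j\<in>I. \<forall>k\<in>C0. finite (P j k) \<and> card (P j k \<inter> {x. hi k < x}) \<le> D" using C0(1) Pk by blast
  have "(NN D ^^ card I) n \<le> card C0" using C0(2) by simp
  then have "\<exists>C\<subseteq>C0. card C = n \<and> (\<forall>j\<in>I. hprop1 lo hi (P j) C)" by (rule insert.IH[OF fC0 h1 h2 h3])
  then obtain C where C: "C \<subseteq> C0" "card C = n" "\<forall>j\<in>I. hprop1 lo hi (P j) C" by blast
  show ?case
  proof (intro exI[of _ C] conjI ballI)
    show "C \<subseteq> S" using C(1) C0(1) by (rule subset_trans)
    show "card C = n" by (rule C(2))
    fix j assume "j \<in> insert i I"
    then consider "j = i" | "j \<in> I" by blast
    then show "hprop1 lo hi (P j) C"
    proof cases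
      case 1 then show ?thesis using hprop1_mono[OF C0(3) C(1)] by simp
    next
      case 2 then show ?thesis using C(3) by blast
    qed
  qed
qed

lemma multi2:
  fixes D :: nat and lo hi :: "nat \<Rightarrow> real" and P :: "nat \<Rightarrow> nat \<Rightarrow> real set" and I :: "nat set"
  assumes "finite I"
  shows "finite S \<Longrightarrow> (\<forall>k\<in>S. lo k < hi k) \<Longrightarrow> (\<forall>k\<in>S. \<forall>k'\<in>S. k < k' \<longrightarrow> hi k \<le> lo k')
    \<Longrightarrow> (\<forall>i\<in>I. \<forall>k\<in>S. finite (P i k) \<and> card (P i k \<inter> {x. x < lo k}) \<le> D)
    \<Longrightarrow> (NN D ^^ card I) n \<le> card S \<Longrightarrow> \<exists>C\<subseteq>S. card C = n \<and> (\<forall>i\<in>I. hprop2 lo hi (P i) C)"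
  using assms
proof (induction I arbitrary: S rule: finite_induct)
  case empty
  have "n \<le> card S" using empty.prems(5) by simp
  then obtain T where "T \<subseteq> S" "card T = n" by (rule obtain_subset_with_card_n)
  then show ?case by (intro exI[of _ T]) simp
next
  case (insert i I)
  have fS: "finite S" and blk: "\<forall>k\<in>S. lo k < hi k" and ord: "\<forall>k\<in>S. \<forall>k'\<in>S. k < k' \<longrightarrow> hi k \<le> lo k'"
    and Pk: "\<forall>j\<in>insert i I. \<forall>k\<in>S. finite (P j k) \<and> card (P j k \<inter> {x. x < lo k}) \<le> D"
    using insert.prems by auto
  have NNle: "NN D ((NN D ^^ card I) n) \<le> card S" using insert.prems(5) insert.hyps by simp
  have Pi: "\<forall>k\<in>S. finite (P i k) \<and> card (P i k \<inter> {x. x < lo k}) \<le> D" using Pk by blast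
  have "\<exists>C\<subseteq>S. card C = (NN D ^^ card I) n \<and> hprop2 lo hi (P i) C" by (rule pass2[OF fS blk ord Pi NNle])
  then obtain C0 where C0: "C0 \<subseteq> S" "card C0 = (NN D ^^ card I) n" "hprop2 lo hi (P i) C0" by blast
  have fC0: "finite C0" using C0(1) fS by (rule finite_subset)
  have h1: "\<forall>k\<in>C0. lo k < hi k" using C0(1) blk by blast
  have h2: "\<forall>k\<in>C0. \<forall>k'\<in>C0. k < k' \<longrightarrow> hi k \<le> lo k'" using C0(1) ord by blast
  have h3: "\<forall>j\<in>I. \<forall>k\<in>C0. finite (P j k) \<and> card (P j k \<inter> {x. x < lo k}) \<le> D" using C0(1) Pk by blast
  have "(NN D ^^ card I) n \<le> card C0" using C0(2) by simp
  then have "\<exists>C\<subseteq>C0. card C = n \<and> (\<forall>j\<in>I. hprop2 lo hi (P j) C)" by (rule insert.IH[OF fC0 h1 h2 h3])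
  then obtain C where C: "C \<subseteq> C0" "card C = n" "\<forall>j\<in>I. hprop2 lo hi (P j) C" by blast
  show ?case
  proof (intro exI[of _ C] conjI ballI)
    show "C \<subseteq> S" using C(1) C0(1) by (rule subset_trans)
    show "card C = n" by (rule C(2))
    fix j assume "j \<in> insert i I"
    then consider "j = i" | "j \<in> I" by blast
    then show "hprop2 lo hi (P j) C"
    proof cases
      case 1 then show ?thesis using hprop2_mono[OF C0(3) C(1)] by simp
    next
      case 2 then show ?thesis using C(3) by blast
    qed
  qed
qed

lemma NN_le: "NN D n \<le> (D + 2) ^ n"
proof (induction n)
  case 0 then show ?case by simp
next
  case (Suc n)
  show ?case
  proof (cases n)
    case 0 then show ?thesis by simp
  next
    case (Suc n')
    have "(D + 2) ^ 1 \<le> (D + 2) ^ n" by (rule power_increasing) (use Suc in auto)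
    then have "D + 2 \<le> (D + 2) ^ n" by simp
    moreover have "(D + 1) * NN D n \<le> (D + 1) * (D + 2) ^ n" by (rule mult_le_mono2[OF Suc.IH])
    ultimately have "(D + 1) * NN D n + D + 2 \<le> (D + 1) * (D + 2) ^ n + (D + 2) ^ n" by linarith
    also have "\<dots> = (D + 2) ^ Suc n" by (simp add: algebra_simps)
    finally show ?thesis by simp
  qed
qed

lemma NN_iter: "real ((NN D ^^ k) r) \<le> ((\<lambda>z. real (D + 2) powr z) ^^ k) (real r)"
proof (induction k)
  case 0 then show ?case by simp
next
  case (Suc k)
  have "real ((NN D ^^ Suc k) r) = real (NN D ((NN D ^^ k) r))" by simp
  also have "\<dots> \<le> real ((D + 2) ^ ((NN D ^^ k) r))" using NN_le by (simp only: of_nat_le_iff)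
  also have "\<dots> = real (D + 2) powr real ((NN D ^^ k) r)" by (simp add: powr_realpow)
  also have "\<dots> \<le> real (D + 2) powr (((\<lambda>z. real (D + 2) powr z) ^^ k) (real r))"
    by (rule powr_mono[OF Suc.IH]) simp
  also have "\<dots> = ((\<lambda>z. real (D + 2) powr z) ^^ Suc k) (real r)" by simp
  finally show ?case .
qed



lemma sig_less: "partition_params \<sigma> m \<Longrightarrow> i < j \<Longrightarrow> j \<le> m \<Longrightarrow> \<sigma> i < \<sigma> j"
proof (induction j)
  case 0 then show ?case by simp
next
  case (Suc j)
  have s: "\<sigma> j < \<sigma> (Suc j)" using Suc.prems unfolding partition_params_def by auto
  show ?case
  proof (cases "i = j")
    case True then show ?thesis using s by simp
  next
    case False then have "\<sigma> i < \<sigma> j" using Suc by simp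
    then show ?thesis using s by simp
  qed
qed

lemma sig_le: "partition_params \<sigma> m \<Longrightarrow> i \<le> j \<Longrightarrow> j \<le> m \<Longrightarrow> \<sigma> i \<le> \<sigma> j"
  using sig_less[of \<sigma> m i j] by (cases "i = j") auto

lemma iter_ge: "1 < b \<Longrightarrow> 0 < y \<Longrightarrow> y \<le> iter_log b k x \<Longrightarrow> ((\<lambda>z. b powr z) ^^ k) y \<le> x"
proof (induction k arbitrary: y)
  case 0 then show ?case by simp
next
  case (Suc k)
  define z where "z = iter_log b k x"
  have "iter_log b (Suc k) x = (if z > 0 then log b z else 0)" by (simp add: z_def Let_def)
  then have z: "z > 0" and yl: "y \<le> log b z" using Suc.prems by (auto split: if_splits)
  have "b powr y \<le> z" using yl z Suc.prems(1) by (simp add: le_log_iff)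
  then have "((\<lambda>z. b powr z) ^^ k) (b powr y) \<le> x" using Suc.IH[of "b powr y"] Suc.prems(1) z_def by simp
  then show ?case by (simp add: funpow_Suc_right del: funpow.simps)
qed


theorem mainTheorem7:
  fixes t l m :: nat
    and g :: "real \<Rightarrow> complex"
    and \<sigma> :: "nat \<Rightarrow> real"
    and v :: "nat \<Rightarrow> complex"
    and a :: "nat \<Rightarrow> nat \<Rightarrow> real \<Rightarrow> complex"
  assumes "t \<ge> 1" and "l \<ge> 1" and "m \<ge> 1"
    and "arc g"
    and "partition_params \<sigma> m" and "\<sigma> 0 = 0" and "\<sigma> m = 1"
    and "\<forall>i\<in>{1..l}. \<forall>j\<in>{1..m}. arc (a i j)"
    and "\<forall>i\<in>{1..l}. grounded g \<sigma> m (v i) (a i)"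
    and "\<forall>i\<in>{1..l}. \<forall>j\<in>{1..m}.
           finite (path_image (a i j) \<inter> path_image g) \<and>
           card (path_image (a i j) \<inter> path_image g) \<le> t"
  shows "\<exists>J :: nat \<Rightarrow> nat. \<exists>\<tau> :: nat \<Rightarrow> real.
           (let r = nat \<lfloor>iter_log (real t + 1) (2 * l) (real m)\<rfloor> in
             (\<forall>s\<in>{1..r}. 1 \<le> J s \<and> J s \<le> m) \<and>
             (\<forall>s\<in>{1..<r}. J s < J (Suc s)) \<and>
             partition_params \<tau> r \<and>
             (\<forall>i\<in>{1..l}. well_grounded g \<tau> r (v i) (\<lambda>s. a i (J s))) \<and>
             (\<forall>s\<in>{1..r}. piece g \<sigma> (J s) \<subseteq> piece g \<tau> s))"
proof -
  define r where "r = nat \<lfloor>iter_log (real t + 1) (2 * l) (real m)\<rfloor>"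
  have pp: "partition_params \<sigma> m" and s0: "\<sigma> 0 = 0" and sm: "\<sigma> m = 1" using assms by auto
  have injg: "inj_on g {0..1}" using assms(4) by (simp add: arc_def)
  have pig: "path_image g = g ` {0..1}" by (simp add: path_image_def)
  have wholes: "whole g \<sigma> m = path_image g" by (simp add: whole_def s0 sm path_image_def)
  have gr: "\<And>i. i \<in> {1..l} \<Longrightarrow> grounded g \<sigma> m (v i) (a i)" using assms(9) by blast
  have vout: "\<And>i. i \<in> {1..l} \<Longrightarrow> v i \<notin> path_image g" using gr wholes unfolding grounded_def by auto
  show ?thesis
  proof (cases "r = 0")
    case True
    show ?thesis unfolding Let_def r_def[symmetric]
    proof (intro exI[of _ id] exI[of _ "\<lambda>_. 0"] conjI ballI)
      show "partition_params (\<lambda>_. 0::real) r" using True by (simp add: partition_params_def)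
      fix i assume i: "i \<in> {1..l}"
      have "g 0 \<in> path_image g" by (simp add: pig)
      then have "v i \<notin> whole g (\<lambda>_. 0) r" using vout[OF i] True by (auto simp: whole_def)
      then show "well_grounded g (\<lambda>_. 0) r (v i) (\<lambda>s. a i (id s))"
        using True by (simp add: well_grounded_def grounded_def)
    qed (use True in auto)
  next
    case False
    then have r1: "1 \<le> r" by simp
    define D where "D = t - 1"
    have D2: "D + 2 = t + 1" using assms(1) by (simp add: D_def)
    define x where "x = iter_log (real t + 1) (2 * l) (real m)"
    have fl: "1 \<le> \<lfloor>x\<rfloor>" using r1 unfolding r_def x_def by linarith
    have rx: "real r \<le> x"
    proof -
      have "real r = real_of_int \<lfloor>x\<rfloor>" using fl unfolding r_def x_def by simp
      also have "\<dots> \<le> x" by (rule of_int_floor_le)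
      finally show ?thesis .
    qed
    have "((\<lambda>z. (real t + 1) powr z) ^^ (2 * l)) (real r) \<le> real m"
      by (rule iter_ge) (use assms(1) r1 rx x_def in auto)
    moreover have "real ((NN D ^^ (2 * l)) r) \<le> ((\<lambda>z. real (D + 2) powr z) ^^ (2 * l)) (real r)"
      by (rule NN_iter)
    moreover have eq: "real (D + 2) = real t + 1" using D2 by simp
    moreover have "((\<lambda>z. real (D + 2) powr z) ^^ (2 * l)) (real r) = ((\<lambda>z. (real t + 1) powr z) ^^ (2 * l)) (real r)"
      by (simp only: eq)
    ultimately have "real ((NN D ^^ (2 * l)) r) \<le> real m" by linarith
    then have NNm: "(NN D ^^ (2 * l)) r \<le> m" by simp
    define n1 where "n1 = (NN D ^^ l) r"
    have "(NN D ^^ l) n1 = (NN D ^^ (2 * l)) r"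
      unfolding n1_def by (simp add: mult_2 funpow_add)
    then have n1m: "(NN D ^^ card {1..l}) n1 \<le> card {1..m}" using NNm by simp
    define P where "P = (\<lambda>i j. {x\<in>{0..1}. g x \<in> path_image (a i j)})"
    have Pbasic: "finite (P i j) \<and> card (P i j) \<le> t \<and> (\<exists>e\<in>P i j. \<sigma> (j - 1) \<le> e \<and> e \<le> \<sigma> j)"
      if i: "i \<in> {1..l}" and j: "j \<in> {1..m}" for i j
    proof -
      have sub: "g ` P i j \<subseteq> path_image (a i j) \<inter> path_image g" unfolding P_def pig by auto
      have fin: "finite (path_image (a i j) \<inter> path_image g)" and ct: "card (path_image (a i j) \<inter> path_image g) \<le> t"
        using assms(10) i j by auto
      have inj: "inj_on g (P i j)" using injg by (rule inj_on_subset) (auto simp: P_def)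
      have fg: "finite (g ` P i j)" by (rule finite_subset[OF sub fin])
      have fP: "finite (P i j)" by (rule finite_imageD[OF fg inj])
      have "card (P i j) = card (g ` P i j)" by (rule card_image[OF inj, symmetric])
      also have "\<dots> \<le> card (path_image (a i j) \<inter> path_image g)" by (rule card_mono[OF fin sub])
      finally have cP: "card (P i j) \<le> t" using ct by linarith
      have "pathfinish (a i j) \<in> piece g \<sigma> j" using gr[OF i] j unfolding grounded_def by blast
      then obtain e where e: "e \<in> {\<sigma> (j - 1)..\<sigma> j}" "pathfinish (a i j) = g e" unfolding piece_def by auto
      have "\<sigma> 0 \<le> \<sigma> (j - 1)" by (rule sig_le[OF pp]) (use j in auto)
      moreover have "\<sigma> j \<le> \<sigma> m" by (rule sig_le[OF pp]) (use j in auto)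
      ultimately have "e \<in> {0..1}" using e(1) s0 sm by auto
      moreover have "g e \<in> path_image (a i j)" using e(2) pathfinish_in_path_image[of "a i j"] by simp
      ultimately have "e \<in> P i j" unfolding P_def by simp
      then show ?thesis using fP cP e(1) by auto
    qed
    have Pcnt: "finite (P i j) \<and> card (P i j \<inter> {x. \<sigma> j < x}) \<le> D \<and> card (P i j \<inter> {x. x < \<sigma> (j - 1)}) \<le> D"
      if i: "i \<in> {1..l}" and j: "j \<in> {1..m}" for i j
    proof -
      obtain e where e: "e \<in> P i j" "\<sigma> (j - 1) \<le> e" "e \<le> \<sigma> j" and fP: "finite (P i j)" and cP: "card (P i j) \<le> t"
        using Pbasic[OF i j] by blast
      have cd: "card (P i j - {e}) \<le> D" using card_Diff_singleton[OF e(1)] cP unfolding D_def by simp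
      have "card (P i j \<inter> {x. \<sigma> j < x}) \<le> card (P i j - {e})"
        by (rule card_mono) (use fP e in auto)
      moreover have "card (P i j \<inter> {x. x < \<sigma> (j - 1)}) \<le> card (P i j - {e})"
        by (rule card_mono) (use fP e in auto)
      ultimately show ?thesis using cd fP by linarith
    qed
    have blk1: "\<forall>k\<in>{1..m}. \<sigma> (k - 1) < \<sigma> k" using sig_less[OF pp] by auto
    have ord1: "\<forall>k\<in>{1..m}. \<forall>k'\<in>{1..m}. k < k' \<longrightarrow> \<sigma> k \<le> \<sigma> (k' - 1)" using sig_le[OF pp] by auto
    have cnt1: "\<forall>i\<in>{1..l}. \<forall>k\<in>{1..m}. finite (P i k) \<and> card (P i k \<inter> {x. \<sigma> k < x}) \<le> D"
      using Pcnt by blast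
    have "\<exists>C\<subseteq>{1..m}. card C = n1 \<and> (\<forall>i\<in>{1..l}. hprop1 (\<lambda>j. \<sigma> (j - 1)) \<sigma> (P i) C)"
      by (rule multi1[OF _ _ blk1 ord1 cnt1 n1m]) auto
    then obtain C1 where C1: "C1 \<subseteq> {1..m}" "card C1 = n1" "\<forall>i\<in>{1..l}. hprop1 (\<lambda>j. \<sigma> (j - 1)) \<sigma> (P i) C1"
      by blast
    define Aset where "Aset = (\<lambda>c. insert (\<sigma> c) {p \<in> (\<Union>i\<in>{1..l}. P i c). \<sigma> c < p \<and> (\<forall>c'\<in>C1. c < c' \<longrightarrow> p < \<sigma> (c' - 1))})"
    define A where "A = (\<lambda>c. Max (Aset c))"
    have fAset: "finite (Aset c)" if c: "c \<in> C1" for c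
    proof -
      have "finite (\<Union>i\<in>{1..l}. P i c)" using Pcnt C1(1) c by auto
      then show ?thesis unfolding Aset_def by auto
    qed
    have A1: "\<sigma> c \<le> A c" if c: "c \<in> C1" for c
      unfolding A_def by (rule Max_ge[OF fAset[OF c]]) (simp add: Aset_def)
    have A2: "A c \<le> \<sigma> (c' - 1)" if c: "c \<in> C1" "c' \<in> C1" "c < c'" for c c'
    proof -
      have "A c \<in> Aset c" unfolding A_def by (rule Max_in[OF fAset[OF c(1)]]) (simp add: Aset_def)
      then consider "A c = \<sigma> c" | "A c < \<sigma> (c' - 1)" unfolding Aset_def using c by auto
      then show ?thesis
      proof cases
        case 1
        have "\<sigma> c \<le> \<sigma> (c' - 1)" by (rule sig_le[OF pp]) (use c C1(1) in auto)
        then show ?thesis using 1 by simp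
      qed simp
    qed
    have A3: "p \<le> A c" if i: "i \<in> {1..l}" and c: "c \<in> C1" "c' \<in> C1" "c < c'" and p: "p \<in> P i c" "\<sigma> c < p" "p \<le> \<sigma> c'"
      for i c c' p
    proof (cases "\<forall>c''\<in>C1. c < c'' \<longrightarrow> p < \<sigma> (c'' - 1)")
      case True
      then have "p \<in> Aset c" unfolding Aset_def using i p by auto
      then show ?thesis unfolding A_def by (rule Max_ge[OF fAset[OF c(1)]])
    next
      case False
      then obtain c'' where c'': "c'' \<in> C1" "c < c''" "\<sigma> (c'' - 1) \<le> p" by force
      have "hprop1 (\<lambda>j. \<sigma> (j - 1)) \<sigma> (P i) C1" using C1(3) i by blast
      then have "\<not> (\<sigma> (c'' - 1) \<le> p \<and> p \<le> \<sigma> c')" unfolding hprop1_def using c c'' p by blast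
      then show ?thesis using c'' p by simp
    qed
    have fC1: "finite C1" using C1(1) by (rule finite_subset) simp
    have blk2: "\<forall>k\<in>C1. \<sigma> (k - 1) < A k" using blk1 A1 C1(1) by fastforce
    have ord2: "\<forall>k\<in>C1. \<forall>k'\<in>C1. k < k' \<longrightarrow> A k \<le> \<sigma> (k' - 1)" using A2 by blast
    have cnt2: "\<forall>i\<in>{1..l}. \<forall>k\<in>C1. finite (P i k) \<and> card (P i k \<inter> {x. x < \<sigma> (k - 1)}) \<le> D"
      using Pcnt C1(1) by blast
    have n1c: "(NN D ^^ card {1..l}) r \<le> card C1" using C1(2) n1_def by simp
    have "\<exists>C\<subseteq>C1. card C = r \<and> (\<forall>i\<in>{1..l}. hprop2 (\<lambda>j. \<sigma> (j - 1)) A (P i) C)"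
      by (rule multi2[OF _ fC1 blk2 ord2 cnt2 n1c]) auto
    then obtain C2 where C2: "C2 \<subseteq> C1" "card C2 = r" "\<forall>i\<in>{1..l}. hprop2 (\<lambda>j. \<sigma> (j - 1)) A (P i) C2"
      by blast
    have fC2: "finite C2" using C2(1) fC1 by (rule finite_subset)
    define xs where "xs = sorted_list_of_set C2"
    have lxs: "length xs = r" unfolding xs_def using C2(2) by simp
    have sxs: "set xs = C2" unfolding xs_def using fC2 by simp
    have stxs: "sorted_wrt (<) xs" unfolding xs_def by (rule strict_sorted_list_of_set)
    define J where "J = (\<lambda>s. xs ! (s - 1))"
    have JC: "J s \<in> C2" if "s \<in> {1..r}" for s
      unfolding J_def using that lxs sxs by (metis atLeastAtMost_iff diff_less less_le_trans nth_mem zero_less_one)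
    have JC1: "J s \<in> C1" if "s \<in> {1..r}" for s using JC[OF that] C2(1) by blast
    have Jm: "J s \<in> {1..m}" if "s \<in> {1..r}" for s using JC1[OF that] C1(1) by blast
    have Jlt: "J s < J s'" if "1 \<le> s" "s < s'" "s' \<le> r" for s s'
      unfolding J_def by (rule sorted_wrt_nth_less[OF stxs]) (use that lxs in auto)
    define \<tau> where "\<tau> = (\<lambda>s. if s = 0 then \<sigma> (J 1 - 1) else if s < r then A (J s) else \<sigma> (J r))"
    have T1: "\<sigma> (J s) \<le> \<tau> s" if "s \<in> {1..r}" for s
      using A1[OF JC1[OF that]] that unfolding \<tau>_def by auto
    have T2: "\<tau> (s - 1) \<le> \<sigma> (J s - 1)" if s: "s \<in> {1..r}" for s
    proof (cases "s = 1")
      case True then show ?thesis unfolding \<tau>_def by simp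
    next
      case False
      then have s1: "s - 1 \<in> {1..r}" "s - 1 < r" "s - 1 \<noteq> 0" using s by auto
      have "J (s - 1) < J s" by (rule Jlt) (use s False in auto)
      then have "A (J (s - 1)) \<le> \<sigma> (J s - 1)" using A2 JC1[OF s1(1)] JC1[OF s] by blast
      then show ?thesis unfolding \<tau>_def using s1 by simp
    qed
    have T3: "\<sigma> (J s - 1) < \<sigma> (J s)" if s: "s \<in> {1..r}" for s using blk1 Jm[OF s] by blast
    have pieceinc: "piece g \<sigma> (J s) \<subseteq> piece g \<tau> s" if s: "s \<in> {1..r}" for s
      unfolding piece_def using T1[OF s] T2[OF s] by (intro image_mono) auto
    have r1m: "r \<in> {1..r}" "1 \<in> {1..r}" using r1 by auto
    have tau0: "\<tau> 0 = \<sigma> (J 1 - 1)" unfolding \<tau>_def by simp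
    have taur: "\<tau> r = \<sigma> (J r)" unfolding \<tau>_def using r1 by simp
    have t0: "0 \<le> \<tau> 0" unfolding tau0 s0[symmetric] by (rule sig_le[OF pp]) (use Jm[OF r1m(2)] in auto)
    have tr: "\<tau> r \<le> 1" unfolding taur sm[symmetric] by (rule sig_le[OF pp]) (use Jm[OF r1m(1)] in auto)
    have PP: "partition_params \<tau> r" unfolding partition_params_def
    proof (intro conjI allI impI)
      show "0 \<le> \<tau> 0" by (rule t0)
      show "\<tau> r \<le> 1" by (rule tr)
      fix k assume k: "k < r"
      have sk: "Suc k \<in> {1..r}" using k by auto
      have "\<tau> k \<le> \<sigma> (J (Suc k) - 1)" using T2[OF sk] by simp
      also have "\<dots> < \<sigma> (J (Suc k))" by (rule T3[OF sk])
      also have "\<dots> \<le> \<tau> (Suc k)" by (rule T1[OF sk])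
      finally show "\<tau> k < \<tau> (Suc k)" .
    qed
    have wsub: "whole g \<tau> r \<subseteq> path_image g" unfolding whole_def pig using t0 tr by (intro image_mono) auto
    have WG: "well_grounded g \<tau> r (v i) (\<lambda>s. a i (J s))" if i: "i \<in> {1..l}" for i
      unfolding well_grounded_def grounded_def
    proof (intro conjI ballI)
      show "v i \<notin> whole g \<tau> r" using vout[OF i] wsub by blast
      fix s assume s: "s \<in> {1..r}"
      show "pathstart (a i (J s)) = v i" using gr[OF i] Jm[OF s] unfolding grounded_def by blast
      have "pathfinish (a i (J s)) \<in> piece g \<sigma> (J s)" using gr[OF i] Jm[OF s] unfolding grounded_def by blast
      then show "pathfinish (a i (J s)) \<in> piece g \<tau> s" using pieceinc[OF s] by blast
      show "path_image (a i (J s)) \<inter> whole g \<tau> r \<subseteq> piece g \<tau> s"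
      proof
        fix z assume z: "z \<in> path_image (a i (J s)) \<inter> whole g \<tau> r"
        then obtain x where x: "x \<in> {\<tau> 0..\<tau> r}" "z = g x" unfolding whole_def by auto
        have x01: "x \<in> {0..1}" using x(1) t0 tr by auto
        have xP: "x \<in> P i (J s)" unfolding P_def using x01 x(2) z by auto
        have right: "x \<le> \<tau> s"
        proof (rule ccontr)
          assume nx: "\<not> x \<le> \<tau> s"
          have sr: "s < r" using nx x(1) s by (cases "s = r") auto
          then have ts: "\<tau> s = A (J s)" unfolding \<tau>_def using s by auto
          have "J s < J r" by (rule Jlt) (use s sr in auto)
          moreover have "\<sigma> (J s) < x" using A1[OF JC1[OF s]] nx ts by simp
          moreover have "x \<le> \<sigma> (J r)" using x(1) taur by simp
          ultimately have "x \<le> A (J s)" using A3[OF i JC1[OF s] JC1[OF r1m(1)] _ xP] by blast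
          then show False using nx ts by simp
        qed
        have left: "\<tau> (s - 1) \<le> x"
        proof (rule ccontr)
          assume nx: "\<not> \<tau> (s - 1) \<le> x"
          have s2: "s \<noteq> 1" using nx x(1) tau0 by auto
          then have s1: "s - 1 \<in> {1..r}" "s - 1 < r" "s - 1 \<noteq> 0" using s by auto
          have ts: "\<tau> (s - 1) = A (J (s - 1))" unfolding \<tau>_def using s1 by simp
          have d1: "J 1 < J s" by (rule Jlt) (use s s2 in auto)
          have d2: "J (s - 1) < J s" by (rule Jlt) (use s s2 in auto)
          have "hprop2 (\<lambda>j. \<sigma> (j - 1)) A (P i) C2" using C2(3) i by blast
          then have "\<not> (\<sigma> (J 1 - 1) \<le> x \<and> x \<le> A (J (s - 1)))"
            unfolding hprop2_def using JC[OF s] JC[OF r1m(2)] JC[OF s1(1)] xP d1 d2 by blast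
          then show False using x(1) tau0 nx ts by simp
        qed
        show "z \<in> piece g \<tau> s" unfolding piece_def using x(2) left right by auto
      qed
    qed
    show ?thesis unfolding Let_def r_def[symmetric]
    proof (intro exI[of _ J] exI[of _ \<tau>] conjI ballI)
      fix s assume "s \<in> {1..r}" then show "1 \<le> J s" "J s \<le> m" using Jm by auto
    next
      fix s assume "s \<in> {1..<r}" then show "J s < J (Suc s)" by (intro Jlt) auto
    next
      show "partition_params \<tau> r" by (rule PP)
    next
      fix i assume "i \<in> {1..l}" then show "well_grounded g \<tau> r (v i) (\<lambda>s. a i (J s))" by (rule WG)
    next
      fix s assume "s \<in> {1..r}" then show "piece g \<sigma> (J s) \<subseteq> piece g \<tau> s" by (rule pieceinc)
    qed
  qed
qed


end
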